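(* (1) For every integer $d\ge 1$ there is a constant $r_d>0$ such that for every proper convex domain $D\subset\mathbb{R}^d$ and every $z\in D$, one has $s_D(z)\ge r_d$. (2) If $D\subset\mathbb{R}^d$ is a domain such that $\inf_{z\in D} s_D(z)>0$, then $D$ is convex and proper.
   Context: Let $\mathbb{P}\mathbb{R}^d=(\mathbb{R}^{d+1}\setminus\{0\})/\sim$, where $x\sim y$ iff $x=\lambda y$ for some $\lambda\in\mathbb{R}\setminus\{0\}$, and embed $\mathbb{R}^d$ in it as the points $(1:x_1:\dots:x_d)$. A projective map is a map of $\mathbb{P}\mathbb{R}^d$ induced by a linear map of $\mathbb{R}^{d+1}$; it is identified with its restriction to $\mathbb{R}^d$ (a linear-fractional map). For a domain $D\subset\mathbb{R}^d$ and $z\in D$, the (projective) squeezing function is $s_D(z)=\sup\{r>0:\ \exists$ a projective map $\Phi$ with $\Phi(z)=0$, $\Phi(D)\subset B(0,1)$ and $B(0,r)\subset\Phi(D)\}$, where $B(0,r)$ is the open Euclidean ball; one sets $s_D(z)=0$ if no such $\Phi$ exists. A convex domain is called proper if it contains no affine line. *)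

theory Defs
  imports "HOL-Analysis.Analysis"
begin

text \<open>Homogeneous coordinates: R^{d+1} is modelled as real^('n option), with the
  index None playing the role of the 0-th coordinate, so that x in R^d corresponds
  to (1 : x_1 : ... : x_d).\<close>

definition hom_lift :: "real^'n \<Rightarrow> real^('n::finite option)" where
  "hom_lift x = (\<chi> i. case i of None \<Rightarrow> 1 | Some j \<Rightarrow> x $ j)"

definition proj_apply ::
  "real^('n::finite option)^('n option) \<Rightarrow> real^'n \<Rightarrow> real^'n" where
  "proj_apply M x = (let y = M *v hom_lift x in \<chi> j. y $ Some j / y $ None)"

definition proj_finite_at ::
  "real^('n::finite option)^('n option) \<Rightarrow> real^'n \<Rightarrow> bool" where
  "proj_finite_at M x \<longleftrightarrow> (M *v hom_lift x) $ None \<noteq> 0"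

definition squeeze_radii :: "(real^'n::finite) set \<Rightarrow> real^'n \<Rightarrow> real set" where
  "squeeze_radii D z = {r. r > 0 \<and> (\<exists>M :: real^('n option)^('n option).
      invertible M \<and> (\<forall>x\<in>D. proj_finite_at M x) \<and>
      proj_apply M z = 0 \<and> proj_apply M ` D \<subseteq> ball 0 1 \<and>
      ball 0 r \<subseteq> proj_apply M ` D)}"

definition squeezing :: "(real^'n::finite) set \<Rightarrow> real^'n \<Rightarrow> real" where
  "squeezing D z = (if squeeze_radii D z = {} then 0 else Sup (squeeze_radii D z))"

definition domain :: "(real^'n::finite) set \<Rightarrow> bool" where
  "domain D \<longleftrightarrow> open D \<and> connected D \<and> D \<noteq> {}"

definition contains_line :: "(real^'n::finite) set \<Rightarrow> bool" where
  "contains_line D \<longleftrightarrow> (\<exists>a v. v \<noteq> 0 \<and> (\<forall>t::real. a + t *\<^sub>R v \<in> D))"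

definition proper_convex :: "(real^'n::finite) set \<Rightarrow> bool" where
  "proper_convex D \<longleftrightarrow> convex D \<and> \<not> contains_line D"

end

theory Submission
  imports Defs
begin

definition rest :: "real^('n::finite option) \<Rightarrow> real^'n" where
  "rest w = (\<chi> j. w $ Some j)"

lemma hom_None[simp]: "hom_lift x $ None = 1"
  by (simp add: hom_lift_def)
lemma hom_Some[simp]: "hom_lift x $ Some j = x $ j"
  by (simp add: hom_lift_def)
lemma rest_hom[simp]: "rest (hom_lift x) = x"
  by (simp add: rest_def vec_eq_iff)
lemma rest_component[simp]: "rest w $ j = w $ Some j"
  by (simp add: rest_def)
lemma rest_add[simp]: "rest (u + v) = rest u + rest v"
  by (simp add: vec_eq_iff)
lemma rest_diff[simp]: "rest (u - v) = rest u - rest v"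
  by (simp add: vec_eq_iff)
lemma rest_scale[simp]: "rest (c *\<^sub>R u) = c *\<^sub>R rest u"
  by (simp add: vec_eq_iff)
lemma rest_neg[simp]: "rest (- u) = - rest u"
  by (simp add: vec_eq_iff)
lemma rest_zero[simp]: "rest 0 = 0"
  by (simp add: vec_eq_iff)

lemma sum_option: "(\<Sum>i\<in>(UNIV::'n::finite option set). f i) = f None + (\<Sum>j\<in>UNIV. f (Some j))"
proof -
  have "(\<Sum>i\<in>(UNIV::'n option set). f i) = f None + sum f (range Some)"
    by (simp add: UNIV_option_conv)
  also have "sum f (range Some) = (\<Sum>j\<in>UNIV. f (Some j))"
    by (simp add: sum.reindex)
  finally show ?thesis .
qed

lemma vec_eq_option: "(u::real^('n::finite option)) = v \<longleftrightarrow> u $ None = v $ None \<and> rest u = rest v"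
  apply (auto simp: vec_eq_iff)
  by (metis not_None_eq)

lemma norm_rest: "norm (rest w) \<le> norm w"
proof -
  have "rest w \<bullet> rest w = (\<Sum>j\<in>UNIV. w $ Some j * w $ Some j)"
    by (simp add: inner_vec_def)
  also have "\<dots> \<le> w $ None * w $ None + (\<Sum>j\<in>UNIV. w $ Some j * w $ Some j)"
    by simp
  also have "\<dots> = w \<bullet> w"
    by (simp add: inner_vec_def sum_option[where f="\<lambda>i. w $ i * w $ i"])
  finally show ?thesis
    by (simp add: norm_eq_sqrt_inner)
qed

lemma hom_affine: "hom_lift ((1 - a) *\<^sub>R x + a *\<^sub>R y) = (1 - a) *\<^sub>R hom_lift x + a *\<^sub>R hom_lift y"
  by (simp add: vec_eq_option algebra_simps)

lemma G_affine: "M *v hom_lift ((1 - a) *\<^sub>R x + a *\<^sub>R y) = (1 - a) *\<^sub>R (M *v hom_lift x) + a *\<^sub>R (M *v hom_lift y)"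
  by (simp add: hom_affine matrix_vector_right_distrib matrix_vector_mult_scaleR)

lemma proj_apply_alt: "proj_apply M x = inverse ((M *v hom_lift x) $ None) *\<^sub>R rest (M *v hom_lift x)"
  by (simp add: proj_apply_def vec_eq_iff Let_def field_simps)

lemma G_component: "(M *v hom_lift x) $ k = M $ k $ None + (\<Sum>j\<in>UNIV. M $ k $ Some j * x $ j)"
  by (simp add: matrix_vector_mult_def sum_option)

lemma continuous_G: "continuous_on S (\<lambda>x. (M *v hom_lift x) $ k)"
  unfolding G_component by (intro continuous_intros)

lemma mv_inj:
  assumes "invertible M" "M *v u = M *v v" shows "u = v"
proof -
  obtain B where B: "B ** M = mat 1" using assms(1) unfolding invertible_def by blast
  have "B *v (M *v u) = B *v (M *v v)" using assms(2) by simp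
  thus ?thesis by (simp add: matrix_vector_mul_assoc B)
qed

lemma proj_inj:
  assumes M: "invertible M" and gx: "(M *v hom_lift x) $ None \<noteq> 0" and gy: "(M *v hom_lift y) $ None \<noteq> 0"
    and eq: "proj_apply M x = proj_apply M y"
  shows "x = y"
proof -
  define gx' where "gx' = (M *v hom_lift x) $ None"
  define gy' where "gy' = (M *v hom_lift y) $ None"
  have "M *v (inverse gx' *\<^sub>R hom_lift x) = M *v (inverse gy' *\<^sub>R hom_lift y)"
    using eq gx gy unfolding vec_eq_option proj_apply_alt gx'_def gy'_def
    by (simp add: matrix_vector_mult_scaleR)
  hence e: "inverse gx' *\<^sub>R hom_lift x = inverse gy' *\<^sub>R hom_lift y" using mv_inj[OF M] by blast
  have "(inverse gx' *\<^sub>R hom_lift x) $ None = (inverse gy' *\<^sub>R hom_lift y) $ None" using e by simp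
  hence "inverse gx' = inverse gy'" by (simp del: inverse_eq_iff_eq)
  moreover have "inverse gx' *\<^sub>R x = inverse gy' *\<^sub>R y" using arg_cong[OF e, of rest] by simp
  ultimately show ?thesis using gx gx'_def by simp
qed

lemma radii_le1: assumes "r \<in> squeeze_radii D z" shows "r \<le> 1"
proof -
  from assms obtain M where "r > 0" "proj_apply M ` D \<subseteq> ball 0 1" "ball 0 r \<subseteq> proj_apply M ` D"
    unfolding squeeze_radii_def by blast
  hence "ball (0::real^'a) r \<subseteq> ball 0 1" by blast
  with \<open>r > 0\<close> show ?thesis by (simp add: ball_subset_ball_iff)
qed

lemma radii_mono: assumes "r \<in> squeeze_radii D z" "0 < r'" "r' \<le> r" shows "r' \<in> squeeze_radii D z"
  using assms unfolding squeeze_radii_def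
  by (smt (verit, ccfv_SIG) mem_Collect_eq order_trans subset_ball)

lemma radii_bdd: "bdd_above (squeeze_radii D z)"
  using radii_le1 by (meson bdd_above_def)

lemma squeezing_ge: assumes "r \<in> squeeze_radii D z" shows "r \<le> squeezing D z"
  using assms radii_bdd unfolding squeezing_def by (auto intro: cSup_upper)

lemma squeezing_nonneg: "0 \<le> squeezing D z"
proof (cases "squeeze_radii D z = {}")
  case True thus ?thesis by (simp add: squeezing_def)
next
  case False
  then obtain r where r: "r \<in> squeeze_radii D z" by blast
  hence "r > 0" by (simp add: squeeze_radii_def)
  with squeezing_ge[OF r] show ?thesis by simp
qed

lemma radii_of_less: assumes "0 < \<rho>" "\<rho> < squeezing D z" shows "\<rho> \<in> squeeze_radii D z"
proof -
  have ne: "squeeze_radii D z \<noteq> {}" using assms by (auto simp: squeezing_def)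
  hence "\<rho> < Sup (squeeze_radii D z)" using assms by (simp add: squeezing_def)
  then obtain r where "r \<in> squeeze_radii D z" "\<rho> < r" using less_cSupD[OF ne] by blast
  thus ?thesis using radii_mono assms by force
qed

lemma line_no_radii:
  fixes D :: "(real^'n::finite) set"
  assumes "contains_line D" shows "squeeze_radii D z = {}"
proof (rule ccontr)
  assume "squeeze_radii D z \<noteq> {}"
  then obtain M :: "real^('n option)^('n option)" where M: "invertible M" "\<forall>x\<in>D. proj_finite_at M x"
    "proj_apply M ` D \<subseteq> ball 0 1"
    unfolding squeeze_radii_def by blast
  from assms obtain a v where v: "v \<noteq> 0" "\<And>t::real. a + t *\<^sub>R v \<in> D"
    unfolding contains_line_def by blast
  define V :: "real^('n option)" where "V = (\<chi> i. case i of None \<Rightarrow> 0 | Some j \<Rightarrow> v $ j)"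
  have hV: "hom_lift (a + t *\<^sub>R v) = hom_lift a + t *\<^sub>R V" for t
    by (simp add: vec_eq_option V_def vec_eq_iff)
  define G0 where "G0 = M *v hom_lift a"
  define B where "B = M *v V"
  have hG: "M *v hom_lift (a + t *\<^sub>R v) = G0 + t *\<^sub>R B" for t
    by (simp add: hV G0_def B_def matrix_vector_right_distrib matrix_vector_mult_scaleR)
  have g: "G0 $ None + t * B $ None \<noteq> 0" for t
  proof -
    have "(M *v hom_lift (a + t *\<^sub>R v)) $ None \<noteq> 0" using M(2) v(2)[of t] by (simp add: proj_finite_at_def)
    thus ?thesis unfolding hG by simp
  qed
  have B0: "B $ None = 0"
  proof (rule ccontr)
    assume "B $ None \<noteq> 0"
    hence "G0 $ None + (- G0 $ None / B $ None) * B $ None = 0" by simp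
    with g show False by blast
  qed
  have G0n: "G0 $ None \<noteq> 0" using g[of 0] by simp
  have pr: "proj_apply M (a + t *\<^sub>R v) = inverse (G0 $ None) *\<^sub>R (rest G0 + t *\<^sub>R rest B)" for t
    by (simp add: proj_apply_alt hG B0)
  have RB: "rest B = 0"
  proof (rule ccontr)
    assume nz: "rest B \<noteq> 0"
    define t where "t = (2 * \<bar>G0 $ None\<bar> + norm (rest G0)) / norm (rest B)"
    have nb: "norm (rest B) > 0" using nz by simp
    have "t * norm (rest B) = 2 * \<bar>G0 $ None\<bar> + norm (rest G0)" using nb by (simp add: t_def)
    moreover have "t \<ge> 0" using nb by (simp add: t_def)
    ultimately have "norm (rest G0 + t *\<^sub>R rest B) \<ge> 2 * \<bar>G0 $ None\<bar>"
      using norm_triangle_ineq2[of "t *\<^sub>R rest B" "- rest G0"] by (simp add: algebra_simps)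
    moreover have "norm (proj_apply M (a + t *\<^sub>R v)) = norm (rest G0 + t *\<^sub>R rest B) / \<bar>G0 $ None\<bar>"
      unfolding pr norm_scaleR by (simp add: divide_inverse abs_inverse mult.commute)
    ultimately have "\<bar>G0 $ None\<bar> * 2 \<le> \<bar>G0 $ None\<bar> * norm (proj_apply M (a + t *\<^sub>R v))"
      using G0n by (simp add: field_simps)
    hence "norm (proj_apply M (a + t *\<^sub>R v)) \<ge> 2"
      using G0n by (simp add: mult_le_cancel_left_pos)
    moreover have "proj_apply M (a + t *\<^sub>R v) \<in> ball 0 1" using M(3) v(2) by blast
    ultimately show False by simp
  qed
  have "B = 0" using B0 RB by (simp add: vec_eq_option)
  hence "M *v V = M *v 0" by (simp add: B_def)
  hence "V = 0" using mv_inj[OF M(1)] by blast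
  hence "v = 0" by (simp add: V_def vec_eq_iff) (metis option.simps(5))
  with v show False by simp
qed

lemma neg_mv: "(- M) *v u = - (M *v (u::real^'a::finite))"
  by (simp add: vec_eq_iff matrix_vector_mult_def sum_negf)

lemma proj_apply_neg: "proj_apply (- M) = proj_apply M"
  by (rule ext) (simp add: proj_apply_def neg_mv Let_def vec_eq_iff)

lemma vec_frac_identity:
  fixes N V :: "real^'a::finite"
  assumes "a \<noteq> 0" "a + t * b \<noteq> 0"
  shows "inverse (a + t * b) *\<^sub>R (N + t *\<^sub>R V) - inverse a *\<^sub>R N
         = (t / (a * (a + t * b))) *\<^sub>R (a *\<^sub>R V - b *\<^sub>R N)"
proof -
  have sc: "inverse (a + t * b) * (n + t * v) - inverse a * n = (t / (a * (a + t * b))) * (a * v - b * n)" for n v :: real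
    using assms by (simp add: field_simps)
  show ?thesis by (simp add: vec_eq_iff sc)
qed

lemma real_est:
  fixes a b l w nh \<delta> \<rho> :: real
  assumes a: "a > 0" and l: "l > 0" and F1: "a - l * \<bar>b\<bar> > 0" and F2: "l * w < 2 * a * (a - l * \<bar>b\<bar>)"
    and ld: "l * (2 * nh) = \<delta>" and nh: "nh > 0" "nh < \<delta> / 4" "8 * nh < \<rho> * \<delta>" and w: "w \<ge> 0"
  shows "a + b > a / 2" "w / (a * (a + b)) < \<rho>"
proof -
  have d: "\<delta> > 0" using nh by simp
  have "l * \<bar>b\<bar> < a" using F1 by simp
  hence "\<bar>b\<bar> < a / l" using l by (simp add: field_simps)
  also have "a / l = a * (2 * nh) / \<delta>" unfolding ld[symmetric] using l nh by simp
  also have "\<dots> < a / 2"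
  proof -
    have "a * (2 * nh) * 2 < a * \<delta>" using a nh by (simp add: algebra_simps)
    thus ?thesis using d by (simp add: field_simps)
  qed
  finally have bb: "\<bar>b\<bar> < a / 2" .
  thus ab: "a + b > a / 2" by linarith
  have "l * w < 2 * a * a"
    using F2 a l by (smt (verit, best) mult_left_mono mult_nonneg_nonneg abs_ge_zero)
  hence ww: "w < 2 * a * a / l" using l by (simp add: field_simps)
  have "2 * a * a / l = 2 * a * a * (2 * nh) / \<delta>" unfolding ld[symmetric] using l nh by simp
  hence ww2: "w < 4 * a * a * nh / \<delta>" using ww by simp
  have pos: "a * (a + b) > a * (a / 2)" using ab a by simp
  have "w / (a * (a + b)) \<le> w / (a * (a / 2))"
    using w pos a by (intro divide_left_mono) auto
  also have "\<dots> = 2 * w / (a * a)" using a by (simp add: field_simps)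
  also have "\<dots> < 2 * (4 * a * a * nh / \<delta>) / (a * a)" by (rule divide_strict_right_mono) (use ww2 a in auto)
  also have "\<dots> = 8 * nh / \<delta>" using a by (simp add: field_simps)
  also have "\<dots> < \<rho>" using nh d by (simp add: field_simps)
  finally show "w / (a * (a + b)) < \<rho>" .
qed

lemma core_est:
  fixes M :: "real^('n::finite option)^('n option)" and D :: "(real^'n) set"
  assumes gpos: "\<forall>x\<in>D. (M *v hom_lift x) $ None > 0"
    and img: "proj_apply M ` D \<subseteq> ball 0 1"
    and ballq: "ball q \<delta> \<subseteq> convex hull D"
    and hz: "norm (z - q) < \<delta> / 4" "norm (z - q) * 8 < \<rho> * \<delta>"
  shows "(M *v hom_lift q) $ None > 0 \<and> dist (proj_apply M q) (proj_apply M z) < \<rho>"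
proof -
  define g where "g = (\<lambda>x. (M *v hom_lift x) $ None)"
  define T where "T = {y. g y > 0 \<and> proj_apply M y \<in> ball 0 1}"
  have rG: "rest (M *v hom_lift y) = g y *\<^sub>R proj_apply M y" if "g y \<noteq> 0" for y
    using that by (simp add: proj_apply_alt g_def)
  have "convex T"
    unfolding convex_def
  proof (intro ballI allI impI)
    fix x y and u v :: real
    assume x: "x \<in> T" and y: "y \<in> T" and uv: "0 \<le> u" "0 \<le> v" "u + v = 1"
    have u: "u = 1 - v" using uv by simp
    have GG: "M *v hom_lift (u *\<^sub>R x + v *\<^sub>R y) = u *\<^sub>R (M *v hom_lift x) + v *\<^sub>R (M *v hom_lift y)"
      unfolding u by (rule G_affine)
    have gx: "g x > 0" and gy: "g y > 0" using x y by (auto simp: T_def)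
    have S: "g (u *\<^sub>R x + v *\<^sub>R y) = u * g x + v * g y"
      unfolding g_def GG by simp
    have Spos: "u * g x + v * g y > 0"
    proof (cases "u = 0")
      case True thus ?thesis using uv gy by simp
    next
      case False thus ?thesis using uv gx gy by (simp add: add_pos_nonneg)
    qed
    have "proj_apply M (u *\<^sub>R x + v *\<^sub>R y) = inverse (u * g x + v * g y) *\<^sub>R (u *\<^sub>R rest (M *v hom_lift x) + v *\<^sub>R rest (M *v hom_lift y))"
      by (simp add: proj_apply_alt GG g_def)
    also have "\<dots> = (u * g x / (u * g x + v * g y)) *\<^sub>R proj_apply M x + (v * g y / (u * g x + v * g y)) *\<^sub>R proj_apply M y"
      using gx gy by (simp add: rG scaleR_add_right divide_inverse mult.commute mult.left_commute)
    finally have eq: "proj_apply M (u *\<^sub>R x + v *\<^sub>R y) = \<dots>" .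
    have "\<dots> \<in> ball 0 1"
      apply (rule convexD[OF convex_ball])
      using x y uv gx gy Spos by (auto simp: T_def add_divide_distrib[symmetric])
    thus "u *\<^sub>R x + v *\<^sub>R y \<in> T" using eq S Spos by (simp add: T_def)
  qed
  moreover have "D \<subseteq> T" using gpos img by (auto simp: T_def g_def)
  ultimately have HT: "convex hull D \<subseteq> T" by (simp add: hull_minimal)
  show ?thesis
  proof (cases "z = q")
    case True
    have "\<rho> * \<delta> > 0" using hz True by simp
    moreover have "\<delta> > 0" using hz(1) norm_ge_zero[of "z - q"] by linarith
    ultimately have "\<rho> > 0" by (simp add: zero_less_mult_iff)
    moreover have "q \<in> T" using ballq HT \<open>\<delta> > 0\<close> by (meson centre_in_ball subsetD)
    ultimately show ?thesis using True by (simp add: T_def g_def)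
  next
    case False
    define h where "h = z - q"
    define nh where "nh = norm h"
    have nh: "nh > 0" using False by (simp add: nh_def h_def)
    have d: "\<delta> > 0" using hz(1) nh unfolding nh_def h_def by linarith
    define Gq where "Gq = M *v hom_lift q"
    define A where "A = M *v hom_lift z - Gq"
    have Gt: "M *v hom_lift (q + t *\<^sub>R h) = Gq + t *\<^sub>R A" for t
    proof -
      have "q + t *\<^sub>R h = (1 - t) *\<^sub>R q + t *\<^sub>R z" by (simp add: h_def algebra_simps)
      hence "M *v hom_lift (q + t *\<^sub>R h) = (1 - t) *\<^sub>R (M *v hom_lift q) + t *\<^sub>R (M *v hom_lift z)"
        by (simp only: G_affine)
      thus ?thesis by (simp add: Gq_def A_def algebra_simps)
    qed
    have inT: "q + t *\<^sub>R h \<in> T" if "\<bar>t\<bar> * nh < \<delta>" for t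
    proof -
      have "q + t *\<^sub>R h \<in> ball q \<delta>" using that by (simp add: dist_norm nh_def)
      thus ?thesis using ballq HT by auto
    qed
    define a where "a = Gq $ None"
    define b where "b = A $ None"
    define W where "W = a *\<^sub>R rest A - b *\<^sub>R rest Gq"
    have gt: "g (q + t *\<^sub>R h) = a + t * b" for t by (simp add: g_def Gt a_def b_def)
    have pt: "proj_apply M (q + t *\<^sub>R h) = inverse (a + t * b) *\<^sub>R (rest Gq + t *\<^sub>R rest A)" for t
      by (simp add: proj_apply_alt Gt a_def b_def)
    have a: "a > 0" using inT[of 0] d gt[of 0] by (simp add: T_def)
    have diff: "proj_apply M (q + t *\<^sub>R h) - proj_apply M q = (t / (a * (a + t * b))) *\<^sub>R W"
      if "a + t * b \<noteq> 0" for t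
      using pt[of t] pt[of 0] vec_frac_identity[OF _ that, of "rest Gq" "rest A"] a
      by (simp add: W_def)
    define l where "l = \<delta> / (2 * nh)"
    have l: "l > 0" using d nh by (simp add: l_def)
    have ld: "l * (2 * nh) = \<delta>" using nh by (simp add: l_def)
    define t0 where "t0 = (if b \<ge> 0 then - l else l)"
    have t0b: "t0 * b = - (l * \<bar>b\<bar>)" by (simp add: t0_def)
    have t0a: "\<bar>t0\<bar> = l" using l by (simp add: t0_def)
    have "\<bar>t0\<bar> * nh < \<delta>" using t0a ld nh d by (simp add: algebra_simps)
    hence p: "q + t0 *\<^sub>R h \<in> T" by (rule inT)
    hence F1: "a - l * \<bar>b\<bar> > 0" using gt[of t0] t0b by (simp add: T_def)
    have q: "q \<in> T" using inT[of 0] d by simp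
    have "norm (proj_apply M (q + t0 *\<^sub>R h) - proj_apply M q) < 2"
    proof -
      have "norm (proj_apply M (q + t0 *\<^sub>R h) - proj_apply M q) \<le> norm (proj_apply M (q + t0 *\<^sub>R h)) + norm (proj_apply M q)"
        by (rule norm_triangle_ineq4)
      also have "\<dots> < 2" using p q by (simp add: T_def)
      finally show ?thesis .
    qed
    hence "\<bar>t0\<bar> / (a * (a + t0 * b)) * norm W < 2"
      using diff[of t0] F1 t0b a by (simp add: abs_mult)
    hence "l / (a * (a - l * \<bar>b\<bar>)) * norm W < 2" using t0a t0b by simp
    hence F2: "l * norm W < 2 * a * (a - l * \<bar>b\<bar>)"
      using a F1 by (simp add: field_simps)
    have nh4: "nh < \<delta> / 4" "8 * nh < \<rho> * \<delta>" using hz by (auto simp: nh_def h_def)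
    note R = real_est[OF a l F1 F2 ld nh nh4 norm_ge_zero]
    have z: "z = q + 1 *\<^sub>R h" by (simp add: h_def)
    have "dist (proj_apply M q) (proj_apply M z) = norm (proj_apply M (q + 1 *\<^sub>R h) - proj_apply M q)"
      by (simp add: dist_norm norm_minus_commute h_def)
    also have "\<dots> = norm W / (a * (a + b))"
      using diff[of 1] R(1) a by (simp add: abs_mult)
    also have "\<dots> < \<rho>" by (rule R(2))
    finally show ?thesis using a by (simp add: Gq_def a_def)
  qed
qed


lemma nonconvex_radii:
  fixes D :: "(real^'n::finite) set"
  assumes dom: "domain D" and nc: "\<not> convex D" and rho: "0 < \<rho>"
  shows "\<exists>z\<in>D. \<rho> \<notin> squeeze_radii D z"
proof -
  have oD: "open D" and cD: "connected D" and neD: "D \<noteq> {}" using dom by (auto simp: domain_def)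
  define H where "H = convex hull D"
  have oH: "open H" using oD by (simp add: H_def open_convex_hull)
  have cH: "connected H" by (simp add: H_def convex_connected)
  have DH: "D \<subseteq> H" by (simp add: H_def hull_subset)
  obtain q where q: "q \<in> H" "q \<in> closure D" "q \<notin> D"
  proof (rule ccontr)
    assume "\<not> thesis"
    hence A: "\<And>q. q \<in> H \<Longrightarrow> q \<in> closure D \<Longrightarrow> q \<in> D" using that by blast
    have "D \<inter> H = {} \<or> (- closure D) \<inter> H = {}"
      apply (rule connectedD[OF cH oD])
      using A closure_subset by fastforce+
    moreover have "D \<inter> H \<noteq> {}" using DH neD by blast
    ultimately have "H \<subseteq> closure D" by blast
    hence "H \<subseteq> D" using A by blast
    hence "convex hull D = D" using DH by (simp add: H_def)
    hence "convex D" by (metis convex_convex_hull)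
    with nc show False by simp
  qed
  obtain \<delta> where d: "\<delta> > 0" "ball q \<delta> \<subseteq> H" using oH q(1) open_contains_ball by blast
  define e where "e = min (\<delta> / 4) (\<rho> * \<delta> / 8)"
  have e: "e > 0" using d rho by (simp add: e_def)
  obtain z where z: "z \<in> D" "dist z q < e" using q(2) e closure_approachable by metis
  have hz: "norm (z - q) < \<delta> / 4" "norm (z - q) * 8 < \<rho> * \<delta>"
    using z(2) by (auto simp: e_def dist_norm)
  show ?thesis
  proof (intro bexI[OF _ z(1)] notI)
    assume "\<rho> \<in> squeeze_radii D z"
    then obtain M :: "real^('n option)^('n option)" where M: "invertible M" "\<forall>x\<in>D. proj_finite_at M x"
      "proj_apply M z = 0" "proj_apply M ` D \<subseteq> ball 0 1" "ball 0 \<rho> \<subseteq> proj_apply M ` D"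
      unfolding squeeze_radii_def by blast
    define g where "g = (\<lambda>x. (M *v hom_lift x) $ None)"
    have gne: "\<forall>x\<in>D. g x \<noteq> 0" using M(2) by (simp add: proj_finite_at_def g_def)
    have cg: "continuous_on UNIV g" unfolding g_def by (rule continuous_G)
    have "{x. 0 < g x} \<inter> D = {} \<or> {x. g x < 0} \<inter> D = {}"
      apply (rule connectedD[OF cD])
      using cg gne by (auto intro!: open_Collect_less continuous_intros)
    hence sgn: "(\<forall>x\<in>D. g x > 0) \<or> (\<forall>x\<in>D. ((- M) *v hom_lift x) $ None > 0)"
    proof (elim disjE)
      assume "{x. 0 < g x} \<inter> D = {}"
      hence "\<forall>x\<in>D. g x < 0" using gne by (metis (mono_tags) disjoint_iff linorder_neqE_linordered_idom mem_Collect_eq)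
      thus ?thesis by (simp add: neg_mv g_def)
    next
      assume "{x. g x < 0} \<inter> D = {}"
      hence "\<forall>x\<in>D. g x > 0" using gne by (metis (mono_tags) disjoint_iff linorder_neqE_linordered_idom mem_Collect_eq)
      thus ?thesis by simp
    qed
    have res: "g q \<noteq> 0 \<and> dist (proj_apply M q) (proj_apply M z) < \<rho>"
    proof (cases "\<forall>x\<in>D. g x > 0")
      case True
      from core_est[of D M q \<delta> z \<rho>] True M(4) d hz H_def show ?thesis by (simp add: g_def)
    next
      case False
      hence "\<forall>x\<in>D. ((- M) *v hom_lift x) $ None > 0" using sgn by blast
      from core_est[of D "- M" q \<delta> z \<rho>, OF this] M(4) d hz H_def show ?thesis
        by (simp add: g_def proj_apply_neg neg_mv)
    qed
    hence "proj_apply M q \<in> ball 0 \<rho>" using M(3) by (simp add: dist_commute)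
    then obtain y where y: "y \<in> D" "proj_apply M q = proj_apply M y" using M(5) by blast
    have "q = y" using proj_inj[OF M(1) _ _ y(2)] res gne y(1) by (simp add: g_def)
    with y q show False by simp
  qed
qed

lemma part2:
  fixes D :: "(real^'n::finite) set"
  assumes dom: "domain D" and pos: "(INF z\<in>D. squeezing D z) > 0"
  shows "proper_convex D"
proof -
  define \<iota> where "\<iota> = (INF z\<in>D. squeezing D z)"
  have bdd: "bdd_below ((\<lambda>z. squeezing D z) ` D)" using squeezing_nonneg by (meson bdd_belowI2)
  have R: "\<iota> / 2 \<in> squeeze_radii D z" if "z \<in> D" for z
  proof -
    have "\<iota> \<le> squeezing D z" unfolding \<iota>_def using cINF_lower[OF bdd that] .
    thus ?thesis using pos by (intro radii_of_less) (auto simp: \<iota>_def)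
  qed
  have "convex D"
  proof (rule ccontr)
    assume "\<not> convex D"
    from nonconvex_radii[OF dom this, of "\<iota> / 2"] pos R show False by (auto simp: \<iota>_def)
  qed
  moreover have "\<not> contains_line D"
  proof
    assume "contains_line D"
    moreover obtain z where "z \<in> D" using dom by (auto simp: domain_def)
    ultimately show False using R line_no_radii by blast
  qed
  ultimately show ?thesis by (simp add: proper_convex_def)
qed

definition cone_of :: "(real^'n::finite) set \<Rightarrow> (real^('n option)) set" where
  "cone_of D = {w. 0 < w $ None \<and> inverse (w $ None) *\<^sub>R rest w \<in> D}"

lemma hom_in_cone: "x \<in> D \<Longrightarrow> c > 0 \<Longrightarrow> c *\<^sub>R hom_lift x \<in> cone_of D"
  by (simp add: cone_of_def)

lemma cone_decomp: "w \<in> cone_of D \<Longrightarrow> w = (w $ None) *\<^sub>R hom_lift (inverse (w $ None) *\<^sub>R rest w)"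
  by (simp add: cone_of_def vec_eq_option)

lemma cone_scale: assumes "w \<in> cone_of D" "c > 0" shows "c *\<^sub>R w \<in> cone_of D"
proof -
  have eq: "inverse ((c *\<^sub>R w) $ None) *\<^sub>R rest (c *\<^sub>R w) = inverse (w $ None) *\<^sub>R rest w"
    using assms(2) by simp
  show ?thesis
    apply (simp only: cone_of_def mem_Collect_eq eq)
    using assms by (auto simp: cone_of_def)
qed

lemma bounded_linear_rest: "bounded_linear rest"
  by (rule bounded_linear_intro[where K=1]) (auto simp: norm_rest)

lemma continuous_on_rest: "continuous_on S rest"
  by (rule linear_continuous_on[OF bounded_linear_rest])

lemma open_cone: assumes "open D" shows "open (cone_of D)"
proof -
  have eq: "cone_of D = {w. 0 < w $ None} \<inter> (\<lambda>w. inverse (w $ None) *\<^sub>R rest w) -` D"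
    by (auto simp: cone_of_def)
  have c1: "continuous_on {w::real^('a option). 0 < w $ None} (\<lambda>w. w $ None)"
    by (intro continuous_intros)
  have c2: "continuous_on {w::real^('a option). 0 < w $ None} (\<lambda>w. inverse (w $ None))"
    by (rule continuous_on_inverse[OF c1]) auto
  have c3: "continuous_on {w::real^('a option). 0 < w $ None} (\<lambda>w. inverse (w $ None) *\<^sub>R rest w)"
    by (rule continuous_on_scaleR[OF c2 continuous_on_rest])
  have o1: "open {w::real^('a option). 0 < w $ None}"
    by (rule open_Collect_less) (intro continuous_intros)+
  show ?thesis unfolding eq by (rule continuous_open_preimage[OF c3 o1 assms])
qed

lemma convex_cone_of: assumes "convex D" shows "convex (cone_of D)"
  unfolding convex_def
proof (intro ballI allI impI)
  fix x y and u v :: real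
  assume x: "x \<in> cone_of D" and y: "y \<in> cone_of D" and uv: "0 \<le> u" "0 \<le> v" "u + v = 1"
  define a where "a = x $ None"
  define b where "b = y $ None"
  have a: "a > 0" and b: "b > 0" using x y by (auto simp: cone_of_def a_def b_def)
  have S: "(u *\<^sub>R x + v *\<^sub>R y) $ None = u * a + v * b" by (simp add: a_def b_def)
  have Spos: "u * a + v * b > 0"
  proof (cases "u = 0")
    case True thus ?thesis using uv b by simp
  next
    case False thus ?thesis using uv a b by (simp add: add_pos_nonneg)
  qed
  have "inverse (u * a + v * b) *\<^sub>R rest (u *\<^sub>R x + v *\<^sub>R y)
     = (u * a / (u * a + v * b)) *\<^sub>R (inverse a *\<^sub>R rest x) + (v * b / (u * a + v * b)) *\<^sub>R (inverse b *\<^sub>R rest y)"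
  proof -
    have e1: "(u * a / (u * a + v * b)) *\<^sub>R (inverse a *\<^sub>R rest x) = (u / (u * a + v * b)) *\<^sub>R rest x"
      using a by simp
    have e2: "(v * b / (u * a + v * b)) *\<^sub>R (inverse b *\<^sub>R rest y) = (v / (u * a + v * b)) *\<^sub>R rest y"
      using b by simp
    show ?thesis unfolding e1 e2 by (simp add: scaleR_add_right divide_inverse mult.commute)
  qed
  also have "\<dots> \<in> D"
    apply (rule convexD[OF assms])
    using x y uv a b Spos by (auto simp: cone_of_def a_def b_def add_divide_distrib[symmetric])
  finally show "u *\<^sub>R x + v *\<^sub>R y \<in> cone_of D" using S Spos by (simp add: cone_of_def)
qed

lemma zero_in_closure_cone:
  assumes "z \<in> D" shows "0 \<in> closure (cone_of D)"
  unfolding closure_approachable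
proof (intro allI impI)
  fix e :: real assume e: "e > 0"
  define c where "c = e / (2 * norm (hom_lift z))"
  have nz: "norm (hom_lift z) > 0" by (metis hom_None zero_less_norm_iff zero_index zero_neq_one)
  have c: "c > 0" using e nz by (simp add: c_def)
  have "dist (c *\<^sub>R hom_lift z) 0 = e / 2" using nz e by (simp add: c_def)
  thus "\<exists>x\<in>cone_of D. dist x 0 < e" using hom_in_cone[OF assms c] e by (intro bexI) auto
qed

lemma convex_cone_K:
  assumes "convex D" "z \<in> D"
  shows "convex_cone (closure (cone_of D))"
proof -
  let ?C = "cone_of D"
  have cvx: "convex (closure ?C)" using convex_cone_of[OF assms(1)] by simp
  have sc: "c *\<^sub>R w \<in> closure ?C" if "w \<in> closure ?C" "c \<ge> 0" for w c
  proof (cases "c = 0")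
    case True thus ?thesis using zero_in_closure_cone[OF assms(2)] by simp
  next
    case False
    hence c: "c > 0" using that by simp
    have "(*\<^sub>R) c ` ?C \<subseteq> ?C" using cone_scale c by blast
    hence "closure ((*\<^sub>R) c ` ?C) \<subseteq> closure ?C" by (rule closure_mono)
    moreover have "c *\<^sub>R w \<in> (*\<^sub>R) c ` closure ?C" using that by blast
    ultimately show ?thesis using closure_scaleR by blast
  qed
  have ad: "x + y \<in> closure ?C" if "x \<in> closure ?C" "y \<in> closure ?C" for x y
  proof -
    have "(1/2) *\<^sub>R x + (1/2) *\<^sub>R y \<in> closure ?C" using convexD[OF cvx that] by simp
    from sc[OF this, of 2] show ?thesis by (simp add: scaleR_add_right)
  qed
  show ?thesis unfolding convex_cone_iff using zero_in_closure_cone[OF assms(2)] sc ad by blast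
qed

lemma convex_cone_sum:
  assumes "convex_cone K" "finite I" "\<And>i. i \<in> I \<Longrightarrow> f i \<in> K"
  shows "sum f I \<in> K"
  using assms(2,3)
proof (induction I rule: finite_induct)
  case empty thus ?case using convex_cone_contains_0[OF assms(1)] by simp
next
  case (insert x F) thus ?case using convex_cone_add[OF assms(1)] by simp
qed

lemma K_None_nonneg: "w \<in> closure (cone_of D) \<Longrightarrow> 0 \<le> w $ None"
proof -
  assume w: "w \<in> closure (cone_of D)"
  have "closure (cone_of D) \<subseteq> {w. 0 \<le> w $ None}"
    by (rule closure_minimal) (auto simp: cone_of_def intro!: closed_Collect_le continuous_intros)
  thus ?thesis using w by blast
qed

lemma norm_rest_le_dist: "norm (rest c - rest w) \<le> dist c w"
  using norm_rest[of "c - w"] by (simp add: dist_norm)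

lemma recession:
  fixes D :: "(real^'n::finite) set"
  assumes oD: "open D" and cD: "convex D" and w: "w \<in> closure (cone_of D)" and w0: "w $ None = 0"
    and x: "x \<in> D" and t: "t \<ge> 0"
  shows "x + t *\<^sub>R rest w \<in> D"
proof -
  have cl: "y + t *\<^sub>R rest w \<in> closure D" if y: "y \<in> D" for y
    unfolding closure_approachable
  proof (intro allI impI)
    fix e :: real assume e: "e > 0"
    define \<eta> where "\<eta> = min (1 / (t + 1)) (e / (t * (norm y + 1) + 1))"
    have tn: "t * (norm y + 1) \<ge> 0" using t by simp
    have "t * (norm y + 1) + 1 > 0" using tn by simp
    hence \<eta>: "\<eta> > 0" using e t by (simp add: \<eta>_def)
    obtain c where c: "c \<in> cone_of D" "dist c w < \<eta>" using w \<eta> closure_approachable by metis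
    define l where "l = c $ None"
    have l: "l > 0" using c by (simp add: cone_of_def l_def)
    define x' where "x' = inverse l *\<^sub>R rest c"
    have x': "x' \<in> D" using c by (simp add: cone_of_def l_def x'_def)
    have "\<bar>(c - w) $ None\<bar> \<le> norm (c - w)" by (rule component_le_norm_cart)
    hence ll: "l < \<eta>" using c(2) w0 l by (simp add: l_def dist_norm)
    have nr: "norm (rest c - rest w) < \<eta>" using norm_rest_le_dist[of c w] c(2) by simp
    have "t * l \<le> t * \<eta>" using ll t by (simp add: mult_left_mono)
    also have "t * \<eta> \<le> t * (1 / (t + 1))" using t by (intro mult_left_mono) (auto simp: \<eta>_def)
    also have "\<dots> \<le> 1" using t by (simp add: field_simps)
    finally have tl1: "t * l \<le> 1" .
    define p where "p = (1 - t * l) *\<^sub>R y + (t * l) *\<^sub>R x'"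
    have p: "p \<in> D" unfolding p_def
      using convexD[OF cD y x', of "1 - t * l" "t * l"] tl1 t l by simp
    have lx': "l *\<^sub>R x' = rest c" using l by (simp add: x'_def)
    have "p - (y + t *\<^sub>R rest w) = (- (t * l)) *\<^sub>R y + t *\<^sub>R (rest c - rest w)"
      unfolding p_def lx'[symmetric] by (simp add: algebra_simps)
    hence "norm (p - (y + t *\<^sub>R rest w)) \<le> t * l * norm y + t * norm (rest c - rest w)"
    proof -
      have "norm ((- (t * l)) *\<^sub>R y + t *\<^sub>R (rest c - rest w)) \<le> norm ((- (t * l)) *\<^sub>R y) + norm (t *\<^sub>R (rest c - rest w))"
        by (rule norm_triangle_ineq)
      also have "\<dots> = t * l * norm y + t * norm (rest c - rest w)" using t l by simp
      finally show ?thesis using \<open>p - (y + t *\<^sub>R rest w) = _\<close> by simp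
    qed
    also have "\<dots> \<le> t * \<eta> * norm y + t * \<eta>"
      using ll nr t by (intro add_mono mult_right_mono mult_left_mono) auto
    also have "\<dots> = \<eta> * (t * (norm y + 1))" by (simp add: algebra_simps)
    also have "\<dots> < e"
    proof -
      have "\<eta> \<le> e / (t * (norm y + 1) + 1)" by (simp add: \<eta>_def)
      hence "\<eta> * (t * (norm y + 1)) \<le> e / (t * (norm y + 1) + 1) * (t * (norm y + 1))"
        using tn by (rule mult_right_mono)
      also have "\<dots> < e" using e tn by (simp add: field_simps)
      finally show ?thesis .
    qed
    finally show "\<exists>p\<in>D. dist p (y + t *\<^sub>R rest w) < e" using p by (auto simp: dist_norm)
  qed
  obtain \<delta> where d: "\<delta> > 0" "ball x \<delta> \<subseteq> D" using oD x open_contains_ball by blast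
  have "ball (x + t *\<^sub>R rest w) \<delta> \<subseteq> closure D"
  proof
    fix p assume "p \<in> ball (x + t *\<^sub>R rest w) \<delta>"
    hence "p - t *\<^sub>R rest w \<in> ball x \<delta>" by (simp add: dist_norm algebra_simps)
    hence "p - t *\<^sub>R rest w \<in> D" using d by blast
    from cl[OF this] show "p \<in> closure D" by simp
  qed
  hence "x + t *\<^sub>R rest w \<in> interior (closure D)" using d(1) by (meson mem_interior)
  thus ?thesis using convex_interior_closure[OF cD] interior_open[OF oD] by simp
qed

lemma K_pointed:
  fixes D :: "(real^'n::finite) set"
  assumes dom: "domain D" and pc: "proper_convex D"
    and w: "w \<in> closure (cone_of D)" and mw: "- w \<in> closure (cone_of D)"
  shows "w = 0"
proof -
  have oD: "open D" and cD: "convex D" and nl: "\<not> contains_line D"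
    using dom pc by (auto simp: domain_def proper_convex_def)
  obtain z where z: "z \<in> D" using dom by (auto simp: domain_def)
  have w0: "w $ None = 0" using K_None_nonneg[OF w] K_None_nonneg[OF mw] by simp
  have mw0: "(- w) $ None = 0" using w0 by simp
  have "z + t *\<^sub>R rest w \<in> D" for t
  proof (cases "t \<ge> 0")
    case True thus ?thesis using recession[OF oD cD w w0 z] by simp
  next
    case False
    hence "z + (- t) *\<^sub>R rest (- w) \<in> D" using recession[OF oD cD mw mw0 z, of "- t"] by simp
    thus ?thesis by simp
  qed
  hence "rest w = 0" using nl unfolding contains_line_def by blast
  thus ?thesis using w0 by (simp add: vec_eq_option)
qed

lemma pointed_bounded:
  fixes K :: "(real^'m::finite) set"
  assumes cK: "closed K" and ccK: "convex_cone K" and pt: "\<And>w. w \<in> K \<Longrightarrow> - w \<in> K \<Longrightarrow> w = 0"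
  shows "\<exists>B. \<forall>u. u \<in> K \<longrightarrow> z - u \<in> K \<longrightarrow> norm u \<le> B"
proof -
  define S where "S = K \<inter> sphere 0 1"
  have nrm: "inverse (norm u) *\<^sub>R u \<in> S" if "u \<in> K" "u \<noteq> 0" for u
    using that convex_cone_scaleR[OF ccK] by (simp add: S_def)
  show ?thesis
  proof (cases "S = {}")
    case True
    hence "\<forall>u. u \<in> K \<longrightarrow> u = 0" using nrm by blast
    thus ?thesis by (intro exI[of _ 0]) auto
  next
    case False
    have cS: "compact S" unfolding S_def using cK by (intro closed_Int_compact) auto
    have Kne: "K \<noteq> {}" using convex_cone_nonempty[OF ccK] .
    have "continuous_on S (\<lambda>u. infdist (- u) K)" by (intro continuous_intros)
    then obtain u0 where u0: "u0 \<in> S" "\<And>y. y \<in> S \<Longrightarrow> infdist (- u0) K \<le> infdist (- y) K"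
      using continuous_attains_inf[OF cS False] by blast
    define \<epsilon> where "\<epsilon> = infdist (- u0) K"
    have "- u0 \<notin> K"
    proof
      assume "- u0 \<in> K"
      hence "u0 = 0" using pt u0(1) by (auto simp: S_def)
      thus False using u0(1) by (simp add: S_def)
    qed
    hence \<epsilon>: "\<epsilon> > 0" using infdist_pos_not_in_closed[OF cK Kne] by (simp add: \<epsilon>_def)
    show ?thesis
    proof (intro exI[of _ "norm z / \<epsilon>"] allI impI)
      fix u assume u: "u \<in> K" "z - u \<in> K"
      show "norm u \<le> norm z / \<epsilon>"
      proof (cases "u = 0")
        case True thus ?thesis using \<epsilon> by simp
      next
        case False
        define T where "T = norm u"
        have T: "T > 0" using False by (simp add: T_def)
        have "\<epsilon> \<le> infdist (- (inverse T *\<^sub>R u)) K" using u0(2)[OF nrm[OF u(1) False]] by (simp add: \<epsilon>_def T_def)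
        also have "\<dots> \<le> dist (- (inverse T *\<^sub>R u)) (inverse T *\<^sub>R (z - u))"
          using convex_cone_scaleR[OF ccK, of "inverse T" "z - u"] u T by (intro infdist_le) simp
        also have "\<dots> = norm z / T" using T by (simp add: dist_norm algebra_simps divide_inverse)
        finally have "\<epsilon> * T \<le> norm z" using T by (simp add: field_simps)
        thus ?thesis using \<epsilon> by (simp add: T_def field_simps)
      qed
    qed
  qed
qed

lemma continuous_det: "continuous_on S (\<lambda>A::real^'m::finite^'m. det A)"
  unfolding det_def by (intro continuous_intros)

lemma cone_sum:
  assumes "convex_cone K" "finite I" "\<And>i. i \<in> I \<Longrightarrow> f i \<in> K"
  shows "sum f I \<in> K"
  using assms(2,3)
proof (induction I rule: finite_induct)
  case empty thus ?case using convex_cone_contains_0[OF assms(1)] by simp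
next
  case (insert x F) thus ?case using convex_cone_add[OF assms(1)] by simp
qed

lemma transpose_mv_sum: "transpose A *v x = (\<Sum>i\<in>UNIV. x $ i *\<^sub>R A $ i)"
  for A :: "real^'m::finite^'k::finite"
  by (simp add: vec_eq_iff matrix_vector_mult_def transpose_def sum_component mult.commute)

definition feas :: "(real^'m) set \<Rightarrow> real^'m \<Rightarrow> (real^'m::finite^'m) set" where
  "feas K z = {V. (\<forall>i. V $ i \<in> K) \<and> (\<Sum>i\<in>UNIV. V $ i) = z}"

lemma feas_compact:
  fixes K :: "(real^'m::finite) set"
  assumes cK: "closed K" and ccK: "convex_cone K" and pt: "\<And>w. w \<in> K \<Longrightarrow> - w \<in> K \<Longrightarrow> w = 0"
  shows "compact (feas K z)"
proof -
  obtain B where B: "\<And>u. u \<in> K \<Longrightarrow> z - u \<in> K \<Longrightarrow> norm u \<le> B"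
    using pointed_bounded[OF cK ccK pt, of z] by blast
  have bd: "norm (V $ i) \<le> B" if V: "V \<in> feas K z" for V i
  proof -
    have "z - V $ i = (\<Sum>k\<in>UNIV - {i}. V $ k)"
      using V by (simp add: feas_def sum_diff1)
    also have "\<dots> \<in> K" using V by (intro cone_sum[OF ccK]) (auto simp: feas_def)
    finally show ?thesis using B V by (auto simp: feas_def)
  qed
  have "bounded (feas K z)"
    unfolding bounded_iff
  proof (intro exI[of _ "real CARD('m) * B"] ballI)
    fix V assume V: "V \<in> feas K z"
    have "norm V \<le> (\<Sum>i\<in>UNIV. norm (V $ i))"
      unfolding norm_vec_def by (rule L2_set_le_sum) auto
    also have "\<dots> \<le> (\<Sum>i\<in>(UNIV::'m set). B)" by (intro sum_mono bd[OF V])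
    finally show "norm V \<le> real CARD('m) * B" by simp
  qed
  moreover have "closed (feas K z)"
  proof -
    have eq: "feas K z = (\<Inter>i. (\<lambda>V. V $ i) -` K) \<inter> {V. (\<Sum>i\<in>UNIV. V $ i) = z}"
      by (auto simp: feas_def)
    show ?thesis unfolding eq
      by (intro closed_Int closed_INT ballI continuous_closed_vimage cK closed_Collect_eq continuous_intros)
  qed
  ultimately show ?thesis by (simp add: compact_eq_bounded_closed)
qed

lemma feas_nondeg:
  fixes K :: "(real^'m::finite) set"
  assumes ccK: "convex_cone K" and bz: "ball z \<eta> \<subseteq> K" and \<eta>: "\<eta> > 0" and zk: "z $ k0 \<noteq> 0"
  shows "\<exists>V\<in>feas K z. det V \<noteq> 0"
proof -
  define m where "m = real CARD('m)"
  have m: "m \<ge> 1" by (simp add: m_def)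
  define one :: "real^'m" where "one = (\<chi> k. 1)"
  define b where "b = (\<lambda>i. axis i (1::real) - (if i = k0 then one else 0))"
  define \<epsilon> where "\<epsilon> = \<eta> / (m * (1 + norm one) + 1)"
  have no: "norm one \<ge> 0" by simp
  have den: "m * (1 + norm one) + 1 > 0" using m no by (simp add: add_pos_nonneg)
  have \<epsilon>: "\<epsilon> > 0" using \<eta> den by (simp add: \<epsilon>_def)
  define V :: "real^'m^'m" where "V = (\<chi> i. (1 / m) *\<^sub>R z + \<epsilon> *\<^sub>R b i)"
  have nb: "norm (b i) \<le> 1 + norm one" for i
  proof -
    have "norm (b i) \<le> norm (axis i (1::real)) + norm (if i = k0 then one else 0)"
      unfolding b_def by (rule norm_triangle_ineq4)
    also have "\<dots> \<le> 1 + norm one" by simp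
    finally show ?thesis .
  qed
  have rowK: "V $ i \<in> K" for i
  proof -
    have "norm ((m * \<epsilon>) *\<^sub>R b i) \<le> m * \<epsilon> * (1 + norm one)"
      using nb[of i] \<epsilon> m by (simp add: mult_left_mono)
    also have "\<dots> < \<eta>"
    proof -
      have "m * \<epsilon> * (1 + norm one) = \<eta> * (m * (1 + norm one)) / (m * (1 + norm one) + 1)"
        by (simp add: \<epsilon>_def)
      also have "\<dots> < \<eta>" using den \<eta> by (simp add: field_simps)
      finally show ?thesis .
    qed
    finally have "z + (m * \<epsilon>) *\<^sub>R b i \<in> ball z \<eta>" by (simp add: dist_norm)
    hence "z + (m * \<epsilon>) *\<^sub>R b i \<in> K" using bz by blast
    from convex_cone_scaleR[OF ccK _ this, of "1 / m"] m
    show ?thesis by (simp add: V_def scaleR_add_right)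
  qed
  have sb: "(\<Sum>i\<in>UNIV. b i) = 0"
    by (simp add: b_def sum_subtractf vec_eq_iff one_def axis_def sum_component)
  have sumV: "(\<Sum>i\<in>UNIV. V $ i) = z"
  proof -
    have "(\<Sum>i\<in>UNIV. V $ i) = (\<Sum>i\<in>(UNIV::'m set). (1 / m) *\<^sub>R z) + \<epsilon> *\<^sub>R (\<Sum>i\<in>UNIV. b i)"
      by (simp add: V_def sum.distrib scaleR_sum_right)
    also have "(\<Sum>i\<in>(UNIV::'m set). (1 / m) *\<^sub>R z) = (m * (1 / m)) *\<^sub>R z"
      by (simp only: sum_constant_scaleR m_def scaleR_scaleR)
    finally show ?thesis using m sb by simp
  qed
  have "V \<in> feas K z" using rowK sumV by (simp add: feas_def)
  moreover have "det V \<noteq> 0"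
  proof -
    have "invertible (transpose V)"
      unfolding invertible_left_inverse matrix_left_invertible_ker
    proof (intro allI impI)
      fix x :: "real^'m" assume x0: "transpose V *v x = 0"
      define s where "s = (\<Sum>i\<in>UNIV. x $ i) / m"
      have comp: "(transpose V *v x) $ k = s * z $ k + \<epsilon> * (x $ k - x $ k0)" for k
      proof -
        have "(transpose V *v x) $ k = (\<Sum>i\<in>UNIV. x $ i * ((1 / m) * z $ k + \<epsilon> * b i $ k))"
          unfolding transpose_mv_sum by (simp add: V_def sum_component)
        also have "\<dots> = (\<Sum>i\<in>UNIV. x $ i) / m * z $ k + \<epsilon> * (\<Sum>i\<in>UNIV. x $ i * b i $ k)"
          by (simp add: algebra_simps sum.distrib sum_distrib_left sum_divide_distrib)
        also have "(\<Sum>i\<in>UNIV. x $ i * b i $ k) = x $ k - x $ k0"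
        proof -
          have bk: "b i $ k = (if i = k then 1 else 0) - (if i = k0 then 1 else 0)" for i
            by (simp add: b_def one_def axis_def)
          have "(\<Sum>i\<in>UNIV. x $ i * b i $ k) = (\<Sum>i\<in>UNIV. (if i = k then x $ i else 0)) - (\<Sum>i\<in>UNIV. (if i = k0 then x $ i else 0))"
          proof -
            have "x $ i * b i $ k = (if i = k then x $ i else 0) - (if i = k0 then x $ i else 0)" for i
              by (simp add: bk right_diff_distrib)
            thus ?thesis by (simp add: sum_subtractf)
          qed
          thus ?thesis by simp
        qed
        finally show ?thesis by (simp add: s_def)
      qed
      have "s * z $ k0 = 0" using comp[of k0] x0 by simp
      hence s0: "s = 0" using zk by simp
      have xk: "x $ k = x $ k0" for k using comp[of k] x0 s0 \<epsilon> by simp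
      have "(\<Sum>i\<in>UNIV. x $ i) = 0" using s0 m by (simp add: s_def)
      moreover have "(\<Sum>i\<in>UNIV. x $ i) = (\<Sum>i\<in>(UNIV::'m set). x $ k0)" by (rule sum.cong) (auto intro: xk)
      ultimately have "m * x $ k0 = 0" by (simp add: m_def)
      hence "x $ k0 = 0" using m by simp
      thus "x = 0" using xk by (simp add: vec_eq_iff)
    qed
    thus ?thesis by (simp add: invertible_det_nz)
  qed
  ultimately show ?thesis by blast
qed

lemma feas_max:
  fixes K :: "(real^'m::finite) set"
  assumes cK: "closed K" and ccK: "convex_cone K" and pt: "\<And>w. w \<in> K \<Longrightarrow> - w \<in> K \<Longrightarrow> w = 0"
    and bz: "ball z \<eta> \<subseteq> K" and \<eta>: "\<eta> > 0" and zk: "z $ k0 \<noteq> 0"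
  shows "\<exists>U\<in>feas K z. det U \<noteq> 0 \<and> (\<forall>V\<in>feas K z. \<bar>det V\<bar> \<le> \<bar>det U\<bar>)"
proof -
  obtain V0 where V0: "V0 \<in> feas K z" "det V0 \<noteq> 0" using feas_nondeg[OF ccK bz \<eta> zk] by blast
  have "continuous_on (feas K z) (\<lambda>V. \<bar>det V\<bar>)" by (intro continuous_intros continuous_det)
  then obtain U where U: "U \<in> feas K z" "\<And>V. V \<in> feas K z \<Longrightarrow> \<bar>det V\<bar> \<le> \<bar>det U\<bar>"
    using continuous_attains_sup[OF feas_compact[OF cK ccK pt]] V0(1) by blast
  have "\<bar>det V0\<bar> \<le> \<bar>det U\<bar>" using U(2) V0(1) .
  hence "det U \<noteq> 0" using V0(2) by auto
  thus ?thesis using U by blast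
qed

lemma row_eq: "row i A = A $ i"
  by (simp add: row_def vec_eq_iff)

lemma det_perturb:
  fixes U :: "real^'m::finite^'m" and c :: "real^'m"
  assumes nz: "\<And>i. i \<noteq> j \<Longrightarrow> 1 - t * c $ i \<noteq> 0"
    and w: "transpose U *v c = w"
  shows "det (\<chi> i. if i = j then (1 - t * c $ j) *\<^sub>R U $ j + t *\<^sub>R w else (1 - t * c $ i) *\<^sub>R U $ i)
       = (\<Prod>i\<in>UNIV - {j}. 1 - t * c $ i) * det U"
proof -
  define d where "d = (\<lambda>i. if i = j then 1 else 1 - t * c $ i)"
  define V2 :: "real^'m^'m" where "V2 = (\<chi> i. d i *s U $ i)"
  have dV2: "det V2 = (\<Prod>i\<in>UNIV. d i) * det U"
    unfolding V2_def det_rows_mul by simp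
  have pd: "(\<Prod>i\<in>UNIV. d i) = (\<Prod>i\<in>UNIV - {j}. 1 - t * c $ i)"
    by (simp add: d_def prod.remove[of UNIV j] if_distrib cong: prod.cong) (rule prod.cong, auto)
  define x where "x = (\<Sum>i\<in>UNIV - {j}. (t * c $ i / d i) *\<^sub>R row i V2)"
  have rV2: "row i V2 = d i *\<^sub>R U $ i" for i by (simp add: V2_def row_eq scalar_mult_eq_scaleR)
  have x: "x = (\<Sum>i\<in>UNIV - {j}. (t * c $ i) *\<^sub>R U $ i)"
    unfolding x_def rV2 using nz by (intro sum.cong) (auto simp: d_def)
  have wsum: "w = (\<Sum>i\<in>UNIV. c $ i *\<^sub>R U $ i)" unfolding w[symmetric] transpose_mv_sum ..
  have xspan: "x \<in> vec.span {row k V2 |k. k \<noteq> j}"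
    unfolding x_def scalar_mult_eq_scaleR[symmetric]
  proof (rule vec.span_sum)
    fix i assume "i \<in> UNIV - {j}"
    hence "row i V2 \<in> vec.span {row k V2 |k. k \<noteq> j}" by (intro vec.span_base) blast
    thus "(t * c $ i / d i) *s row i V2 \<in> vec.span {row k V2 |k. k \<noteq> j}" by (rule vec.span_scale)
  qed
  have eq: "(\<chi> i. if i = j then (1 - t * c $ j) *\<^sub>R U $ j + t *\<^sub>R w else (1 - t * c $ i) *\<^sub>R U $ i)
      = (\<chi> k. if k = j then row j V2 + x else row k V2)"
  proof -
    have "(1 - t * c $ j) *\<^sub>R U $ j + t *\<^sub>R w = U $ j + x"
    proof -
      have "t *\<^sub>R w = (t * c $ j) *\<^sub>R U $ j + (\<Sum>i\<in>UNIV - {j}. (t * c $ i) *\<^sub>R U $ i)"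
        unfolding wsum scaleR_sum_right by (simp add: sum.remove[of UNIV j])
      thus ?thesis unfolding x by (simp add: algebra_simps)
    qed
    thus ?thesis by (simp add: vec_eq_iff rV2 d_def)
  qed
  show ?thesis unfolding eq det_row_span[OF xspan] dV2 pd ..
qed

lemma prod_deriv_contra:
  fixes c :: "'m::finite \<Rightarrow> real" and A :: "'m set"
  assumes S: "(\<Sum>i\<in>A. c i) < 0"
  shows "\<exists>d>0. \<forall>t. 0 < t \<and> t < d \<longrightarrow> 1 < (\<Prod>i\<in>A. 1 - t * c i)"
proof -
  have der: "((\<lambda>t. \<Prod>i\<in>A. 1 - t * c i) has_field_derivative (\<Sum>i\<in>A. (- c i) * (\<Prod>y\<in>A-{i}. 1 - 0 * c y))) (at 0)"
    by (rule has_field_derivative_prod) (auto intro!: derivative_eq_intros)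
  have "(\<Sum>i\<in>A. (- c i) * (\<Prod>y\<in>A-{i}. 1 - 0 * c y)) = - (\<Sum>i\<in>A. c i)"
    by (simp add: sum_negf)
  with der have der': "((\<lambda>t. \<Prod>i\<in>A. 1 - t * c i) has_real_derivative - (\<Sum>i\<in>A. c i)) (at 0)" by simp
  from DERIV_pos_inc_right[OF der'] S obtain d where "d > 0" "\<And>h. 0 < h \<Longrightarrow> h < d \<Longrightarrow> (\<Prod>i\<in>A. 1 - 0 * c i) < (\<Prod>i\<in>A. 1 - (0 + h) * c i)"
    by force
  thus ?thesis by auto
qed

lemma key_ineq:
  fixes K :: "(real^'m::finite) set" and U :: "real^'m^'m"
  assumes ccK: "convex_cone K" and U: "U \<in> feas K z" and dU: "det U \<noteq> 0"
    and mx: "\<forall>V\<in>feas K z. \<bar>det V\<bar> \<le> \<bar>det U\<bar>"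
    and wK: "w \<in> K" and wc: "transpose U *v c = w"
  shows "0 \<le> (\<Sum>i\<in>UNIV - {j}. c $ i)"
proof (rule ccontr)
  assume "\<not> ?thesis"
  hence S: "(\<Sum>i\<in>UNIV - {j}. c $ i) < 0" by simp
  obtain d where d: "d > 0" "\<And>t. 0 < t \<Longrightarrow> t < d \<Longrightarrow> 1 < (\<Prod>i\<in>UNIV - {j}. 1 - t * c $ i)"
    using prod_deriv_contra[OF S] by blast
  define s where "s = (\<Sum>i\<in>UNIV. \<bar>c $ i\<bar>)"
  have s: "s \<ge> 0" by (simp add: s_def sum_nonneg)
  define t where "t = min (d / 2) (1 / (2 * (s + 1)))"
  have t: "t > 0" "t < d" using d s by (auto simp: t_def)
  have t2: "t \<le> 1 / (2 * (s + 1))" by (simp add: t_def)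
  have ts: "t * s < 1"
  proof -
    have "t * s \<le> (1 / (2 * (s + 1))) * s" using t2 s by (rule mult_right_mono)
    also have "(1 / (2 * (s + 1))) * s < 1" using s by (simp add: field_simps)
    finally show ?thesis .
  qed
  have pos: "1 - t * c $ i > 0" for i
  proof -
    have "\<bar>c $ i\<bar> \<le> s" unfolding s_def by (rule member_le_sum) auto
    hence "t * \<bar>c $ i\<bar> \<le> t * s" using t by (simp add: mult_left_mono)
    moreover have "t * c $ i \<le> t * \<bar>c $ i\<bar>" using t(1) by (intro mult_left_mono) auto
    ultimately show ?thesis using ts by linarith
  qed
  define V where "V = (\<chi> i. if i = j then (1 - t * c $ j) *\<^sub>R U $ j + t *\<^sub>R w else (1 - t * c $ i) *\<^sub>R U $ i)"
  have UK: "U $ i \<in> K" for i using U by (simp add: feas_def)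
  have "V \<in> feas K z"
  proof -
    have rows: "V $ i \<in> K" for i
    proof (cases "i = j")
      case True
      have "(1 - t * c $ j) *\<^sub>R U $ j \<in> K" using convex_cone_scaleR[OF ccK _ UK] pos less_imp_le by blast
      moreover have "t *\<^sub>R w \<in> K" using convex_cone_scaleR[OF ccK _ wK] t(1) by simp
      ultimately show ?thesis using convex_cone_add[OF ccK] True by (simp add: V_def)
    next
      case False
      have "(1 - t * c $ i) *\<^sub>R U $ i \<in> K" using convex_cone_scaleR[OF ccK _ UK] pos less_imp_le by blast
      thus ?thesis using False by (simp add: V_def)
    qed
    have V_alt: "V $ i = (1 - t * c $ i) *\<^sub>R U $ i + (if i = j then t *\<^sub>R w else 0)" for i
      by (simp add: V_def)
    have "(\<Sum>i\<in>UNIV. V $ i) = (\<Sum>i\<in>UNIV. U $ i) - t *\<^sub>R (\<Sum>i\<in>UNIV. c $ i *\<^sub>R U $ i) + t *\<^sub>R w"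
      unfolding V_alt by (simp add: sum.distrib scaleR_sum_right algebra_simps sum_subtractf)
    also have "(\<Sum>i\<in>UNIV. c $ i *\<^sub>R U $ i) = w" unfolding wc[symmetric] transpose_mv_sum ..
    finally have "(\<Sum>i\<in>UNIV. V $ i) = z" using U by (simp add: feas_def)
    thus ?thesis using rows by (simp add: feas_def)
  qed
  hence "\<bar>det V\<bar> \<le> \<bar>det U\<bar>" using mx by blast
  moreover have "det V = (\<Prod>i\<in>UNIV - {j}. 1 - t * c $ i) * det U"
  proof -
    have nz: "\<And>i. i \<noteq> j \<Longrightarrow> 1 - t * c $ i \<noteq> 0" using pos by (metis order_less_irrefl)
    show ?thesis unfolding V_def by (rule det_perturb[OF nz wc])
  qed
  ultimately have "(\<Prod>i\<in>UNIV - {j}. 1 - t * c $ i) * \<bar>det U\<bar> \<le> 1 * \<bar>det U\<bar>"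
    using d(2)[OF t] by (simp add: abs_mult)
  hence "(\<Prod>i\<in>UNIV - {j}. 1 - t * c $ i) \<le> 1" using dU by (simp add: mult_le_cancel_right_pos)
  with d(2)[OF t] show False by simp
qed

definition Smat :: "real \<Rightarrow> real \<Rightarrow> real^('n::finite option)^('n option)" where
  "Smat m R = (\<chi> k i. case k of None \<Rightarrow> 1 | Some j \<Rightarrow> ((if i = Some j then 1 else 0) - 1 / m) / R)"

lemma Smat_None: "(Smat m R *v c) $ None = (\<Sum>i\<in>UNIV. c $ i)"
  by (simp add: Smat_def matrix_vector_mult_def)

lemma Smat_Some: "(Smat m R *v c) $ Some j = (c $ Some j - (\<Sum>i\<in>UNIV. c $ i) / m) / R"
proof -
  have "(Smat m R *v c) $ Some j = (\<Sum>i\<in>UNIV. ((if i = Some j then 1 else 0) - 1 / m) / R * c $ i)"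
    by (simp add: Smat_def matrix_vector_mult_def)
  also have "\<dots> = (\<Sum>i\<in>UNIV. (if i = Some j then c $ i else 0) / R - (c $ i / m) / R)"
    by (intro sum.cong refl) (simp add: diff_divide_distrib left_diff_distrib)
  also have "\<dots> = (c $ Some j - (\<Sum>i\<in>UNIV. c $ i) / m) / R"
    by (simp add: sum_subtractf sum_divide_distrib[symmetric] diff_divide_distrib)
  finally show ?thesis .
qed

lemma Smat_inv: assumes "R \<noteq> 0" shows "invertible (Smat m R :: real^('n::finite option)^('n option))"
  unfolding invertible_left_inverse matrix_left_invertible_ker
proof (intro allI impI)
  fix c :: "real^('n option)" assume c: "Smat m R *v c = 0"
  have s: "(\<Sum>i\<in>UNIV. c $ i) = 0" using arg_cong[OF c, of "\<lambda>v. v $ None"] by (simp add: Smat_None)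
  have cs: "c $ Some j = 0" for j using arg_cong[OF c, of "\<lambda>v. v $ Some j"] assms by (simp add: Smat_Some s)
  have "c $ None = 0" using s by (simp add: sum_option cs)
  thus "c = 0" using cs by (simp add: vec_eq_option vec_eq_iff)
qed

lemma card_option_ge2: "real CARD('n::finite option) \<ge> 2"
proof -
  have "CARD('n option) = Suc CARD('n)"
    by (simp add: UNIV_option_conv card_image inj_Some)
  moreover have "CARD('n) \<ge> 1" by (simp add: Suc_leI finite_UNIV_card_ge_0)
  ultimately show ?thesis by simp
qed

lemma card_option_eq: "real CARD('n::finite) = real CARD('n option) - 1"
proof -
  have "CARD('n option) = Suc CARD('n)"
    by (simp add: UNIV_option_conv card_image inj_Some)
  thus ?thesis by simp
qed

lemma mv_neg: "A *v (- x) = - (A *v (x::real^'a::finite))"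
  by (simp add: vec_eq_iff matrix_vector_mult_def sum_negf)

lemma part1:
  fixes D :: "(real^'n::finite) set" and z
  assumes dom: "domain D" and pc: "proper_convex D" and zD: "z \<in> D"
  shows "1 / ((real CARD('n option))^2 * ((real CARD('n option))^2 + 1)) \<in> squeeze_radii D z"
proof -
  define m where "m = real CARD('n option)"
  have m2: "m \<ge> 2" using card_option_ge2 by (simp add: m_def)
  have cardn: "real CARD('n) = m - 1" unfolding m_def by (rule card_option_eq)
  define R where "R = m^2 + 1"
  have R: "R > 0" unfolding R_def using zero_le_power2[of m] by linarith
  define r where "r = 1 / (m^2 * R)"
  have oD: "open D" and cD: "convex D" using dom pc by (auto simp: domain_def proper_convex_def)
  define C where "C = cone_of D"
  define K where "K = closure C"
  have oC: "open C" using open_cone[OF oD] by (simp add: C_def)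
  have cvC: "convex C" using convex_cone_of[OF cD] by (simp add: C_def)
  have cK: "closed K" by (simp add: K_def)
  have ccK: "convex_cone K" using convex_cone_K[OF cD zD] by (simp add: K_def C_def)
  have pt: "\<And>w. w \<in> K \<Longrightarrow> - w \<in> K \<Longrightarrow> w = 0" using K_pointed[OF dom pc] by (simp add: K_def C_def)
  have CK: "C \<subseteq> K" by (simp add: K_def closure_subset)
  define z' where "z' = hom_lift z"
  have z'C: "z' \<in> C" using hom_in_cone[OF zD, of 1] by (simp add: C_def z'_def)
  obtain \<eta> where \<eta>: "\<eta> > 0" "ball z' \<eta> \<subseteq> C" using oC z'C open_contains_ball by blast
  have bz: "ball z' \<eta> \<subseteq> K" using \<eta> CK by blast
  have z'N: "z' $ None \<noteq> 0" by (simp add: z'_def)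
  obtain U where U: "U \<in> feas K z'" "det U \<noteq> 0" and mx: "\<forall>V\<in>feas K z'. \<bar>det V\<bar> \<le> \<bar>det U\<bar>"
    using feas_max[OF cK ccK pt bz \<eta>(1) z'N] by blast
  define T where "T = transpose U"
  have "invertible T" using U(2) by (simp add: T_def invertible_det_nz)
  then obtain Ti where Ti: "Ti ** T = mat 1" "T ** Ti = mat 1" unfolding invertible_def by blast
  have invTi: "invertible Ti" using Ti unfolding invertible_def by blast
  define coef where "coef = (\<lambda>w. Ti *v w)"
  have Tcoef: "T *v coef w = w" for w by (simp add: coef_def matrix_vector_mul_assoc Ti)
  have coefT: "coef (T *v a) = a" for a by (simp add: coef_def matrix_vector_mul_assoc Ti)
  have coef_scale: "coef (c *\<^sub>R w) = c *\<^sub>R coef w" for c w by (simp add: coef_def matrix_vector_mult_scaleR)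
  have UK: "U $ i \<in> K" for i using U(1) by (simp add: feas_def)
  have key: "0 \<le> (\<Sum>i\<in>UNIV - {j}. coef w $ i)" if "w \<in> K" for w j
    using key_ineq[OF ccK U(1) U(2) mx that, of "coef w" j] Tcoef by (simp add: T_def)
  define L where "L = (\<lambda>w. \<Sum>i\<in>UNIV. coef w $ i)"
  have Lsplit: "L w = coef w $ j + (\<Sum>i\<in>UNIV - {j}. coef w $ i)" for w j
    by (simp add: L_def sum.remove[of UNIV j])
  have cle: "coef w $ j \<le> L w" if "w \<in> K" for w j using key[OF that, of j] Lsplit[of w j] by linarith
  have TK: "T *v a \<in> K" if "\<And>i. 0 \<le> a $ i" for a
  proof -
    have "T *v a = (\<Sum>i\<in>UNIV. a $ i *\<^sub>R U $ i)" unfolding T_def transpose_mv_sum ..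
    also have "\<dots> \<in> K" using that UK by (intro cone_sum[OF ccK]) (auto intro: convex_cone_scaleR[OF ccK])
    finally show ?thesis .
  qed
  have Lnn: "L w \<ge> 0" if "w \<in> K" for w
  proof (rule ccontr)
    assume "\<not> ?thesis"
    hence neg: "coef w $ j \<le> 0" for j using cle[OF that, of j] by simp
    have "T *v (- coef w) \<in> K" using neg by (intro TK) simp
    hence "- w \<in> K" using Tcoef[of w] by (simp add: mv_neg)
    hence "w = 0" using pt that by blast
    hence "L w = 0" by (simp add: L_def coef_def)
    with \<open>\<not> L w \<ge> 0\<close> show False by simp
  qed
  have Lpos: "L w > 0" if "w \<in> K" "w \<noteq> 0" for w
  proof (rule ccontr)
    assume "\<not> ?thesis"
    hence "L w = 0" using Lnn[OF that(1)] by simp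
    hence neg: "coef w $ j \<le> 0" for j using cle[OF that(1), of j] by simp
    have "T *v (- coef w) \<in> K" using neg by (intro TK) simp
    hence "- w \<in> K" using Tcoef[of w] by (simp add: mv_neg)
    hence "w = 0" using pt that by blast
    with that show False by simp
  qed
  have cge: "coef w $ j \<ge> - (m * L w)" if "w \<in> K" for w j
  proof -
    have "(\<Sum>i\<in>UNIV - {j}. coef w $ i) \<le> (\<Sum>i\<in>UNIV - {j}. L w)"
      using cle[OF that] by (intro sum_mono) auto
    also have "\<dots> = (m - 1) * L w" by (simp add: m_def card_Diff_singleton)
    finally have "(\<Sum>i\<in>UNIV - {j}. coef w $ i) \<le> (m - 1) * L w" .
    hence "coef w $ j \<ge> L w - (m - 1) * L w" using Lsplit[of w j] by linarith
    moreover have "L w - (m - 1) * L w \<ge> - (m * L w)" using Lnn[OF that] by (simp add: algebra_simps)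
    ultimately show ?thesis by linarith
  qed
  have coefz: "coef z' = (\<chi> i. 1)"
  proof -
    have "T *v (\<chi> i. 1) = (\<Sum>i\<in>UNIV. U $ i)" unfolding T_def transpose_mv_sum by simp
    also have "\<dots> = z'" using U(1) by (simp add: feas_def)
    finally show ?thesis using coefT by metis
  qed
  have posC: "T *v a \<in> C" if "\<And>i. 0 < a $ i" for a
  proof -
    define P where "P = (\<Inter>i\<in>UNIV. {w. 0 < (Ti *v w) $ i})"
    have oP: "open P" unfolding P_def
      by (intro open_INT ballI finite open_Collect_less) (auto simp: matrix_vector_mult_def intro!: continuous_intros)
    have "P \<subseteq> K"
    proof
      fix w assume "w \<in> P"
      hence "\<And>i. 0 \<le> coef w $ i" by (auto simp: P_def coef_def less_imp_le)
      from TK[OF this] show "w \<in> K" by (simp add: Tcoef)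
    qed
    hence "P \<subseteq> interior K" using oP interior_maximal by blast
    also have "interior K = C" unfolding K_def using convex_interior_closure[OF cvC] interior_open[OF oC] by simp
    finally have PC: "P \<subseteq> C" .
    have "T *v a \<in> P" using that coefT[of a] by (simp add: P_def coef_def)
    thus ?thesis using PC by blast
  qed
  define M where "M = Smat m R ** Ti"
  have Mw: "M *v w = Smat m R *v coef w" for w by (simp add: M_def coef_def matrix_vector_mul_assoc)
  have invM: "invertible M" unfolding M_def using Smat_inv[of R m] R invTi by (intro invertible_mult) auto
  have homK: "hom_lift x \<in> K" "hom_lift x \<noteq> 0" if "x \<in> D" for x
  proof -
    show "hom_lift x \<in> K" using hom_in_cone[OF that, of 1] CK by (simp add: C_def subset_iff)
    show "hom_lift x \<noteq> 0" by (metis hom_None zero_index zero_neq_one)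
  qed
  have gx: "(M *v hom_lift x) $ None = L (hom_lift x)" for x by (simp add: Mw Smat_None L_def)
  have projf: "proj_apply M x $ j = (coef (hom_lift x) $ Some j / L (hom_lift x) - 1 / m) / R"
    if "L (hom_lift x) \<noteq> 0" for x j
  proof -
    have "proj_apply M x $ j = (M *v hom_lift x) $ Some j / (M *v hom_lift x) $ None"
      by (simp add: proj_apply_def Let_def)
    also have "\<dots> = ((coef (hom_lift x) $ Some j - L (hom_lift x) / m) / R) / L (hom_lift x)"
      by (simp only: Mw Smat_Some Smat_None L_def)
    also have "\<dots> = (coef (hom_lift x) $ Some j / L (hom_lift x) - 1 / m) / R"
      using that R by (simp add: field_simps)
    finally show ?thesis .
  qed
  have fin: "\<forall>x\<in>D. proj_finite_at M x"
  proof
    fix x assume "x \<in> D"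
    hence "L (hom_lift x) > 0" using Lpos homK by blast
    thus "proj_finite_at M x" by (simp add: proj_finite_at_def gx)
  qed
  have pz: "proj_apply M z = 0"
  proof -
    have Lz: "L z' = m" by (simp add: L_def coefz m_def)
    show ?thesis using m2 Lz by (simp add: vec_eq_iff projf z'_def[symmetric] coefz)
  qed
  have img: "proj_apply M ` D \<subseteq> ball 0 1"
  proof
    fix y assume "y \<in> proj_apply M ` D"
    then obtain x where x: "x \<in> D" "y = proj_apply M x" by blast
    define w where "w = hom_lift x"
    have wK: "w \<in> K" and Lw: "L w > 0" using homK[OF x(1)] Lpos by (auto simp: w_def)
    have bj: "\<bar>proj_apply M x $ j\<bar> \<le> (m + 1) / R" for j
    proof -
      have LmL: "L w \<le> m * L w" using Lw m2 by simp
      have "\<bar>coef w $ Some j\<bar> \<le> m * L w"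
        using cle[OF wK, of "Some j"] cge[OF wK, of "Some j"] LmL by (simp add: abs_le_iff)
      hence cm: "\<bar>coef w $ Some j\<bar> \<le> m * L w" .
      have c1: "\<bar>coef w $ Some j / L w\<bar> \<le> m"
      proof -
        have "\<bar>coef w $ Some j / L w\<bar> = \<bar>coef w $ Some j\<bar> / L w" using Lw by (simp add: abs_divide)
        also have "\<dots> \<le> m" using cm Lw by (simp only: pos_divide_le_eq mult.commute)
        finally show ?thesis .
      qed
      have c2: "\<bar>1 / m\<bar> \<le> 1" using m2 by simp
      have c3: "\<bar>coef w $ Some j / L w - 1 / m\<bar> \<le> m + 1" using c1 c2 by linarith
      have pj: "proj_apply M x $ j = (coef w $ Some j / L w - 1 / m) / R"
        unfolding w_def using projf[of x j] Lw unfolding w_def by linarith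
      have "\<bar>proj_apply M x $ j\<bar> = \<bar>coef w $ Some j / L w - 1 / m\<bar> / R" using R unfolding pj by (simp add: abs_divide)
      also have "\<dots> \<le> (m + 1) / R" using c3 R by (simp add: divide_right_mono)
      finally show ?thesis .
    qed
    have "norm (proj_apply M x) \<le> (\<Sum>j\<in>UNIV. \<bar>proj_apply M x $ j\<bar>)" by (rule norm_le_l1_cart)
    also have "\<dots> \<le> (\<Sum>j\<in>(UNIV::'n set). (m + 1) / R)" by (intro sum_mono bj)
    also have "\<dots> = (m - 1) * (m + 1) / R" by (simp add: cardn)
    also have "\<dots> < 1" using R by (simp add: R_def field_simps power2_eq_square)
    finally show "y \<in> ball 0 1" using x by simp
  qed
  have inner: "ball 0 r \<subseteq> proj_apply M ` D"
  proof
    fix y :: "real^'n" assume y: "y \<in> ball 0 r"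
    have yj: "\<bar>R * y $ j\<bar> < 1 / m^2" for j
    proof -
      have "\<bar>y $ j\<bar> \<le> norm y" by (rule component_le_norm_cart)
      also have "norm y < r" using y by simp
      finally have "R * \<bar>y $ j\<bar> < R * r" using R by simp
      thus ?thesis using R m2 by (simp add: r_def abs_mult)
    qed
    define a :: "real^('n option)" where
      "a = (\<chi> i. case i of None \<Rightarrow> 1 - (\<Sum>j\<in>UNIV. R * y $ j + 1 / m) | Some j \<Rightarrow> R * y $ j + 1 / m)"
    have aS: "a $ Some j = R * y $ j + 1 / m" for j by (simp add: a_def)
    have aN: "a $ None = 1 - (\<Sum>j\<in>UNIV. R * y $ j + 1 / m)" by (simp add: a_def)
    have sa: "(\<Sum>i\<in>UNIV. a $ i) = 1" by (simp add: sum_option aS aN)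
    have mm: "1 / m^2 < 1 / m" using m2 by (simp add: field_simps power2_eq_square)
    have apos: "0 < a $ i" for i
    proof (cases i)
      case (Some j)
      have "R * y $ j > - (1 / m^2)" using yj[of j] by linarith
      thus ?thesis using mm by (simp add: Some aS)
    next
      case None
      have "(\<Sum>j\<in>UNIV. R * y $ j) \<le> (\<Sum>j\<in>(UNIV::'n set). \<bar>R * y $ j\<bar>)" by (intro sum_mono) auto
      also have "\<dots> < (\<Sum>j\<in>(UNIV::'n set). 1 / m^2)" using yj by (intro sum_strict_mono) auto
      also have "\<dots> = (m - 1) / m^2" by (simp add: cardn)
      finally have s1: "(\<Sum>j\<in>UNIV. R * y $ j) < (m - 1) / m^2" .
      have "a $ None = 1 - (m - 1) / m - (\<Sum>j\<in>UNIV. R * y $ j)"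
        by (simp add: aN sum.distrib cardn)
      also have "1 - (m - 1) / m = m / m^2" using m2 by (simp add: field_simps power2_eq_square)
      finally have "a $ None = m / m^2 - (\<Sum>j\<in>UNIV. R * y $ j)" .
      moreover have "(m - 1) / m^2 < m / m^2" using m2 by (simp add: divide_strict_right_mono)
      ultimately show ?thesis using s1 None by simp
    qed
    define w where "w = T *v a"
    have wC: "w \<in> C" using posC apos by (simp add: w_def)
    define lam where "lam = w $ None"
    have lam: "lam > 0" using wC by (simp add: C_def cone_of_def lam_def)
    define x where "x = inverse lam *\<^sub>R rest w"
    have xD: "x \<in> D" using wC by (simp add: C_def cone_of_def x_def lam_def)
    have hx: "hom_lift x = inverse lam *\<^sub>R w"
    proof -
      have e: "w = lam *\<^sub>R hom_lift x"
        using cone_decomp[of w D] wC unfolding C_def x_def lam_def by blast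
      have "inverse lam *\<^sub>R w = inverse lam *\<^sub>R (lam *\<^sub>R hom_lift x)" using e by (rule arg_cong)
      thus ?thesis using lam by simp
    qed
    have cx: "coef (hom_lift x) = inverse lam *\<^sub>R a" by (simp add: hx coef_scale w_def coefT)
    have Lx: "L (hom_lift x) = inverse lam" by (simp add: L_def cx sum_distrib_left[symmetric] sa)
    have "proj_apply M x = y"
      using lam R by (simp add: vec_eq_iff projf Lx cx aS less_imp_neq[symmetric])
    thus "y \<in> proj_apply M ` D" using xD by blast
  qed
  have "r > 0" using m2 R by (simp add: r_def)
  hence "r \<in> squeeze_radii D z"
    unfolding squeeze_radii_def using invM fin pz img inner by blast
  thus ?thesis by (simp add: r_def R_def m_def)
qed

theorem theorem1:
  shows "(\<exists>r>0. \<forall>(D :: (real^'n::finite) set) z.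
            domain D \<and> proper_convex D \<and> z \<in> D \<longrightarrow> squeezing D z \<ge> r)
       \<and> (\<forall>D :: (real^'n) set.
            domain D \<and> (INF z\<in>D. squeezing D z) > 0 \<longrightarrow> proper_convex D)"
proof
  define r where "r = 1 / ((real CARD('n option))^2 * ((real CARD('n option))^2 + 1))"
  have r: "r > 0" unfolding r_def by (intro divide_pos_pos) (auto intro!: mult_pos_pos add_nonneg_pos)
  show "\<exists>r>0. \<forall>(D :: (real^'n::finite) set) z.
            domain D \<and> proper_convex D \<and> z \<in> D \<longrightarrow> squeezing D z \<ge> r"
  proof (intro exI[of _ r] conjI allI impI r)
    fix D :: "(real^'n) set" and z
    assume "domain D \<and> proper_convex D \<and> z \<in> D"
    thus "squeezing D z \<ge> r" using part1[of D z] squeezing_ge unfolding r_def by blast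
  qed
next
  show "\<forall>D :: (real^'n) set. domain D \<and> (INF z\<in>D. squeezing D z) > 0 \<longrightarrow> proper_convex D"
    using part2 by blast
qed

end
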